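(* Let $(X,b)$ be a locally finite weighted graph, $V\colon X\to\mathbb R$, and $x\in X$. The following are equivalent: (i) $\mathcal L_V$ satisfies the maximum principle at $x$; (ii) $V(x)\ge0$ or $V(x)+2\deg(x)\le0$.
   Context: Weighted graph: $X$ countable, $b\colon X\times X\to[0,\infty)$ with $b(x,x)=0$, $b(x,y)=b(y,x)$, $\deg(x)=\sum_y b(x,y)<\infty$; locally finite means each vertex has finitely many $y$ with $b(x,y)>0$. $C(X)$ is the space of complex functions on $X$, and $\mathcal L_Vf(x)=\sum_y b(x,y)(f(x)-f(y))+V(x)f(x)$ for $f\in C(X)$. $B_n(x)$ is the set of vertices at combinatorial distance at most $n$ from $x$ (distance = length of a shortest path $x=x_1,\dots,x_k=y$ with $b(x_i,x_{i+1})>0$, length $k-1$). A continuous operator $A$ on $C(X)$ satisfies the maximum principle at $x$ if there exists $n\in\mathbb N$ such that for every $f\in C(X)$, $Af(x)=0$ and $|f(x)|=\sup_{y\in B_n(x)}|f(y)|$ imply $|f(x)|=|f(y)|$ for all $y\in B_n(x)$. *)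

theory Defs
  imports "HOL-Analysis.Analysis"
begin

definition weighted_graph :: "('a::countable \<Rightarrow> 'a \<Rightarrow> real) \<Rightarrow> bool" where
  "weighted_graph b \<longleftrightarrow>
     (\<forall>x y. 0 \<le> b x y) \<and> (\<forall>x. b x x = 0) \<and> (\<forall>x y. b x y = b y x) \<and>
     (\<forall>x. (\<lambda>y. b x y) summable_on UNIV)"

definition locally_finite_graph :: "('a \<Rightarrow> 'a \<Rightarrow> real) \<Rightarrow> bool" where
  "locally_finite_graph b \<longleftrightarrow> (\<forall>x. finite {y. b x y > 0})"

definition deg :: "('a \<Rightarrow> 'a \<Rightarrow> real) \<Rightarrow> 'a \<Rightarrow> real" where
  "deg b x = (\<Sum>\<^sub>\<infinity>y. b x y)"

definition schr_op :: "('a \<Rightarrow> 'a \<Rightarrow> real) \<Rightarrow> ('a \<Rightarrow> real) \<Rightarrow> ('a \<Rightarrow> complex) \<Rightarrow> 'a \<Rightarrow> complex" where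
  "schr_op b V f x = (\<Sum>\<^sub>\<infinity>y. complex_of_real (b x y) * (f x - f y)) + complex_of_real (V x) * f x"

definition comb_ball :: "('a \<Rightarrow> 'a \<Rightarrow> real) \<Rightarrow> nat \<Rightarrow> 'a \<Rightarrow> 'a set" where
  "comb_ball b n x = {y. \<exists>k\<le>n. (x, y) \<in> {(u, v). b u v > 0} ^^ k}"

definition max_principle_at :: "('a \<Rightarrow> 'a \<Rightarrow> real) \<Rightarrow> (('a \<Rightarrow> complex) \<Rightarrow> 'a \<Rightarrow> complex) \<Rightarrow> 'a \<Rightarrow> bool" where
  "max_principle_at b A x \<longleftrightarrow>
     (\<exists>n::nat. n \<ge> 1 \<and>
       (\<forall>f. A f x = 0 \<and> cmod (f x) = (SUP y\<in>comb_ball b n x. cmod (f y))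
            \<longrightarrow> (\<forall>y\<in>comb_ball b n x. cmod (f x) = cmod (f y))))"

end

theory Submission
  imports Defs
begin

lemma deg_fin:
  assumes wg: "weighted_graph b" and lf: "locally_finite_graph b"
  shows "deg b x = (\<Sum>y\<in>{y. b x y > 0}. b x y)"
proof -
  have fin: "finite {y. b x y > 0}" using lf unfolding locally_finite_graph_def by blast
  have nn: "\<And>y. 0 \<le> b x y" using wg unfolding weighted_graph_def by blast
  have "deg b x = infsum (b x) {y. b x y > 0}"
    unfolding deg_def
    by (rule infsum_cong_neutral) (use nn in \<open>auto simp: order_le_less\<close>)
  then show ?thesis using fin by simp
qed

lemma schr_fin:
  assumes wg: "weighted_graph b" and lf: "locally_finite_graph b"
  shows "schr_op b V f x = (\<Sum>y\<in>{y. b x y > 0}. complex_of_real (b x y) * (f x - f y)) + complex_of_real (V x) * f x"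
proof -
  have fin: "finite {y. b x y > 0}" using lf unfolding locally_finite_graph_def by blast
  have nn: "\<And>y. 0 \<le> b x y" using wg unfolding weighted_graph_def by blast
  have "(\<Sum>\<^sub>\<infinity>y. complex_of_real (b x y) * (f x - f y)) = infsum (\<lambda>y. complex_of_real (b x y) * (f x - f y)) {y. b x y > 0}"
  proof (rule infsum_cong_neutral)
    fix y assume "y \<in> UNIV - {y. b x y > 0}"
    then have "b x y = 0" using nn[of y] by auto
    then show "complex_of_real (b x y) * (f x - f y) = 0" by simp
  qed auto
  then show ?thesis using fin unfolding schr_op_def by simp
qed

lemma ball1:
  shows "comb_ball b 1 x = insert x {y. b x y > 0}"
proof (rule set_eqI)
  fix y
  have e: "\<And>k::nat. k \<le> 1 \<longleftrightarrow> k = 0 \<or> k = 1" by auto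
  have "y \<in> comb_ball b 1 x \<longleftrightarrow> (x, y) \<in> {(u, v). b u v > 0} ^^ 0 \<or> (x, y) \<in> {(u, v). b u v > 0} ^^ 1"
    unfolding comb_ball_def mem_Collect_eq e by blast
  also have "\<dots> \<longleftrightarrow> y = x \<or> b x y > 0" by (simp only: relpow.simps(1) relpow_1) blast
  finally show "y \<in> comb_ball b 1 x \<longleftrightarrow> y \<in> insert x {y. b x y > 0}" by blast
qed

lemma nbr_in_ball:
  assumes "n \<ge> 1" "b x y > 0"
  shows "y \<in> comb_ball b n x"
  unfolding comb_ball_def using assms by (intro CollectI exI[of _ 1]) auto

lemma x_in_ball: "x \<in> comb_ball b n x"
  unfolding comb_ball_def by (intro CollectI exI[of _ 0]) auto

theorem proposition4p6:
  fixes b :: "'a::countable \<Rightarrow> 'a \<Rightarrow> real" and V :: "'a \<Rightarrow> real" and x :: 'a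
  assumes "weighted_graph b" and "locally_finite_graph b"
  shows "max_principle_at b (schr_op b V) x \<longleftrightarrow> (V x \<ge> 0 \<or> V x + 2 * deg b x \<le> 0)"
proof -
  define N where "N = {y. b x y > 0}"
  have fin: "finite N" using assms(2) unfolding locally_finite_graph_def N_def by blast
  have nn: "\<And>y. 0 \<le> b x y" using assms(1) unfolding weighted_graph_def by blast
  define D where "D = deg b x"
  have D: "D = (\<Sum>y\<in>N. b x y)" using deg_fin[OF assms] unfolding D_def N_def .
  have L: "\<And>f. schr_op b V f x = (\<Sum>y\<in>N. complex_of_real (b x y) * (f x - f y)) + complex_of_real (V x) * f x"
    using schr_fin[OF assms] unfolding N_def by blast
  show ?thesis
  proof
    assume mp: "max_principle_at b (schr_op b V) x"
    show "V x \<ge> 0 \<or> V x + 2 * deg b x \<le> 0"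
    proof (rule ccontr)
      assume "\<not> ?thesis"
      then have h1: "V x < 0" and h2: "V x + 2 * D > 0" unfolding D_def by auto
      then have Dpos: "D > 0" by linarith
      then obtain y0 where y0: "y0 \<in> N" using D by (cases "N = {}") auto
      from mp obtain n where n: "n \<ge> 1" and P: "\<And>f. schr_op b V f x = 0 \<and> cmod (f x) = (SUP y\<in>comb_ball b n x. cmod (f y))
            \<longrightarrow> (\<forall>y\<in>comb_ball b n x. cmod (f x) = cmod (f y))"
        unfolding max_principle_at_def by blast
      define t where "t = (D + V x) / D"
      have t1: "\<bar>t\<bar> < 1" using h1 h2 Dpos unfolding t_def by (auto simp: abs_less_iff field_simps)
      define f where "f = (\<lambda>z. if z = x then (1::complex) else complex_of_real t)"
      have xN: "x \<notin> N" using assms(1) unfolding N_def weighted_graph_def by auto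
      have "schr_op b V f x = (\<Sum>y\<in>N. complex_of_real (b x y) * (1 - complex_of_real t)) + complex_of_real (V x)"
        unfolding L f_def using xN by (auto intro!: sum.cong)
      also have "\<dots> = complex_of_real (D * (1 - t) + V x)"
        unfolding D by (simp add: sum_distrib_right[symmetric])
      also have "D * (1 - t) + V x = 0" unfolding t_def using Dpos by (simp add: field_simps)
      finally have Z: "schr_op b V f x = 0" by simp
      have S: "cmod (f x) = (SUP y\<in>comb_ball b n x. cmod (f y))"
        unfolding f_def
        by (rule cSup_eq_maximum[symmetric]) (use x_in_ball[of x b n] t1 in \<open>auto intro!: image_eqI[of _ _ x]\<close>)
      have "y0 \<in> comb_ball b n x" using nbr_in_ball[OF n] y0 unfolding N_def by auto
      then have "cmod (f x) = cmod (f y0)" using P Z S by blast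
      moreover have "y0 \<noteq> x" using y0 xN by auto
      ultimately show False using t1 unfolding f_def by simp
    qed
  next
    assume ii: "V x \<ge> 0 \<or> V x + 2 * deg b x \<le> 0"
    have ge: "\<bar>D + V x\<bar> \<ge> D" using ii unfolding D_def[symmetric] using D sum_nonneg[of N "b x"] nn by auto
    show "max_principle_at b (schr_op b V) x"
      unfolding max_principle_at_def
    proof (intro exI[of _ 1] conjI allI impI)
      fix f assume A: "schr_op b V f x = 0 \<and> cmod (f x) = (SUP y\<in>comb_ball b 1 x. cmod (f y))"
      define M where "M = cmod (f x)"
      have finB: "finite (comb_ball b 1 x)" unfolding ball1 using fin N_def by simp
      have le: "\<And>y. y \<in> N \<Longrightarrow> cmod (f y) \<le> M"
      proof -
        fix y assume "y \<in> N"
        then have yB: "y \<in> comb_ball b 1 x" unfolding ball1 N_def by blast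
        have "cmod (f y) \<le> (SUP y\<in>comb_ball b 1 x. cmod (f y))"
          by (rule cSUP_upper[OF yB]) (use finB in auto)
        then show "cmod (f y) \<le> M" unfolding M_def using A by simp
      qed
      have eq: "complex_of_real (D + V x) * f x = (\<Sum>y\<in>N. complex_of_real (b x y) * f y)"
        using A unfolding L D by (simp add: algebra_simps sum_subtractf sum_distrib_left)
      have "\<bar>D + V x\<bar> * M = cmod (\<Sum>y\<in>N. complex_of_real (b x y) * f y)"
        using eq[symmetric] unfolding M_def by (simp add: norm_mult del: of_real_add)
      also have "\<dots> \<le> (\<Sum>y\<in>N. b x y * cmod (f y))"
        by (rule order_trans[OF norm_sum]) (simp add: norm_mult nn)
      finally have s1: "\<bar>D + V x\<bar> * M \<le> (\<Sum>y\<in>N. b x y * cmod (f y))" .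
      have "D * M \<le> \<bar>D + V x\<bar> * M" using ge M_def by (simp add: mult_right_mono)
      moreover have e1: "(\<Sum>y\<in>N. b x y * (M - cmod (f y))) = D * M - (\<Sum>y\<in>N. b x y * cmod (f y))"
        unfolding D by (simp add: right_diff_distrib sum_subtractf sum_distrib_right)
      ultimately have "(\<Sum>y\<in>N. b x y * (M - cmod (f y))) \<le> 0"
        using s1 by linarith
      moreover have nn2: "\<forall>y\<in>N. 0 \<le> b x y * (M - cmod (f y))" using le nn by simp
      moreover have "0 \<le> (\<Sum>y\<in>N. b x y * (M - cmod (f y)))"
        by (rule sum_nonneg) (use nn2 in blast)
      ultimately have "(\<Sum>y\<in>N. b x y * (M - cmod (f y))) = 0" by linarith
      then have "\<forall>y\<in>N. b x y * (M - cmod (f y)) = 0" using sum_nonneg_eq_0_iff[OF fin, of "\<lambda>y. b x y * (M - cmod (f y))"] nn2 by simp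
      then have "\<forall>y\<in>N. cmod (f y) = M" unfolding N_def by auto
      then show "\<forall>y\<in>comb_ball b 1 x. cmod (f x) = cmod (f y)"
        unfolding ball1 M_def N_def by auto
    qed simp
  qed
qed

end
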